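(* Let $\mathfrak{k}_1\subset\mathbb{C}^{N_1\times N_1}$ and $\mathfrak{k}_2\subset\mathbb{C}^{N_2\times N_2}$ be the (real) Lie algebras of Lie subgroups $K_1,K_2$ of matrices, and let $\mathfrak{t}_1,\mathfrak{t}_2$ be torus algebras of $\mathfrak{k}_1$ and $\mathfrak{k}_2$, respectively. Then $\mathfrak{t}_1\widehat{\oplus}\mathfrak{t}_2$ is a torus algebra of $\mathfrak{k}_1\widehat{\oplus}\mathfrak{k}_2$. If moreover $\mathfrak{k}_1\subset sl_{\mathbb{C}}(N_1)$ and $\mathfrak{k}_2\subset sl_{\mathbb{C}}(N_2)$, then the converse holds: if $\mathfrak{t}_1\subset\mathfrak{k}_1$ and $\mathfrak{t}_2\subset\mathfrak{k}_2$ are Lie subalgebras such that $\mathfrak{t}_1\widehat{\oplus}\mathfrak{t}_2$ is a torus algebra of $\mathfrak{k}_1\widehat{\oplus}\mathfrak{k}_2$, then $\mathfrak{t}_1$ and $\mathfrak{t}_2$ are torus algebras of $\mathfrak{k}_1$ and $\mathfrak{k}_2$.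
   Context: A torus algebra of a Lie algebra is a maximal Abelian subalgebra. For subspaces $\mathfrak{a}_1\subset\mathbb{C}^{N_1\times N_1}$, $\mathfrak{a}_2\subset\mathbb{C}^{N_2\times N_2}$, $\mathfrak{a}_1\widehat{\oplus}\mathfrak{a}_2=\{\Omega_1\otimes I_{N_2}+I_{N_1}\otimes\Omega_2\mid \Omega_1\in\mathfrak{a}_1,\Omega_2\in\mathfrak{a}_2\}$; $\mathfrak{k}_1\widehat{\oplus}\mathfrak{k}_2$ is the Lie algebra of $K_1\otimes K_2=\{U_1\otimes U_2\}$. $sl_{\mathbb{C}}(N)$ is the set of all $A\in\mathbb{C}^{N\times N}$ with $\mathrm{tr}\,A=0$. *)

theory Defs
  imports "HOL-Analysis.Analysis"
begin

text \<open>Complex N x N matrices are modelled as complex^'n^'n (dimension = CARD('n)).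
  They form a real vector space; real Lie subalgebras are real subspaces closed
  under the matrix commutator.\<close>

definition commutator :: "complex^'n^'n \<Rightarrow> complex^'n^'n \<Rightarrow> complex^'n^'n" where
  "commutator A B = A ** B - B ** A"

definition real_lie_algebra :: "(complex^'n^'n) set \<Rightarrow> bool" where
  "real_lie_algebra L \<longleftrightarrow> subspace L \<and> (\<forall>A\<in>L. \<forall>B\<in>L. commutator A B \<in> L)"

definition abelian :: "(complex^'n^'n) set \<Rightarrow> bool" where
  "abelian L \<longleftrightarrow> (\<forall>A\<in>L. \<forall>B\<in>L. commutator A B = 0)"

definition torus_algebra :: "(complex^'n^'n) set \<Rightarrow> (complex^'n^'n) set \<Rightarrow> bool" where
  "torus_algebra t k \<longleftrightarrow> real_lie_algebra t \<and> t \<subseteq> k \<and> abelian t \<and>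
     (\<forall>s. real_lie_algebra s \<and> abelian s \<and> t \<subseteq> s \<and> s \<subseteq> k \<longrightarrow> s = t)"

text \<open>Kronecker product, with rows/columns indexed by pairs (lexicographic order is irrelevant).\<close>
definition kron :: "complex^'n^'n \<Rightarrow> complex^'m^'m \<Rightarrow> complex^('n \<times> 'm)^('n \<times> 'm)" where
  "kron A B = (\<chi> p. \<chi> q. A $ fst p $ fst q * B $ snd p $ snd q)"

definition hat_sum :: "(complex^'n^'n) set \<Rightarrow> (complex^'m^'m) set \<Rightarrow> (complex^('n \<times> 'm)^('n \<times> 'm)) set" where
  "hat_sum a1 a2 = {kron X (mat 1) + kron (mat 1) Y | X Y. X \<in> a1 \<and> Y \<in> a2}"

definition sl :: "(complex^'n^'n) set" where
  "sl = {A. trace A = 0}"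

end

theory Submission
  imports Defs
begin

lemma kron_nth[simp]: "kron A B $ p $ q = A $ fst p $ fst q * B $ snd p $ snd q"
  by (simp add: kron_def)

lemma kron_mult: "kron A B ** kron C D = kron (A ** C) (B ** D)"
proof -
  have "(kron A B ** kron C D) $ p $ q = (kron (A ** C) (B ** D)) $ p $ q" for p q
  proof -
    have "(kron A B ** kron C D) $ p $ q = (\<Sum>r\<in>UNIV. (A$fst p$fst r * B$snd p$snd r) * (C$fst r$fst q * D$snd r$snd q))"
      by (simp add: matrix_matrix_mult_def)
    also have "\<dots> = (\<Sum>a\<in>UNIV. \<Sum>b\<in>UNIV. (A$fst p$a * B$snd p$b) * (C$a$fst q * D$b$snd q))"
      by (subst sum.cartesian_product) (simp add: split_beta)
    also have "\<dots> = (\<Sum>a\<in>UNIV. A$fst p$a * C$a$fst q) * (\<Sum>b\<in>UNIV. B$snd p$b * D$b$snd q)"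
      unfolding sum_product by (intro sum.cong refl) (simp add: mult_ac)
    also have "\<dots> = (kron (A ** C) (B ** D)) $ p $ q"
      by (simp add: matrix_matrix_mult_def)
    finally show ?thesis .
  qed
  then show ?thesis by (simp add: vec_eq_iff)
qed

lemma kron_add1: "kron (A + B) C = kron A C + kron B C"
  by (simp add: vec_eq_iff distrib_right)
lemma kron_add2: "kron C (A + B) = kron C A + kron C B"
  by (simp add: vec_eq_iff distrib_left)
lemma kron_diff1: "kron (A - B) C = kron A C - kron B C"
  by (simp add: vec_eq_iff left_diff_distrib)
lemma kron_diff2: "kron C (A - B) = kron C A - kron C B"
  by (simp add: vec_eq_iff right_diff_distrib)
lemma kron_scale1: "kron (c *\<^sub>R A) C = c *\<^sub>R kron A C"
  by (simp add: vec_eq_iff)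
lemma kron_scale2: "kron C (c *\<^sub>R A) = c *\<^sub>R kron C A"
  by (simp add: vec_eq_iff)
lemma kron_zero1[simp]: "kron 0 C = 0"
  by (simp add: vec_eq_iff)
lemma kron_zero2[simp]: "kron C 0 = 0"
  by (simp add: vec_eq_iff)

lemma kron_I1_eq0: "kron (X::complex^'n^'n) (mat 1 :: complex^'m^'m) = 0 \<Longrightarrow> X = 0"
proof -
  assume h: "kron X (mat 1 :: complex^'m^'m) = 0"
  obtain k :: 'm where True by blast
  have "X $ i $ j = 0" for i j
  proof -
    have "kron X (mat 1 :: complex^'m^'m) $ (i,k) $ (j,k) = 0" using h by simp
    then show "X $ i $ j = 0" by (simp add: mat_def)
  qed
  then show "X = 0" by (simp add: vec_eq_iff)
qed

lemma kron_I2_eq0: "kron (mat 1 :: complex^'n^'n) (Y::complex^'m^'m) = 0 \<Longrightarrow> Y = 0"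
proof -
  assume h: "kron (mat 1 :: complex^'n^'n) Y = 0"
  obtain k :: 'n where True by blast
  have "Y $ i $ j = 0" for i j
  proof -
    have "kron (mat 1 :: complex^'n^'n) Y $ (k,i) $ (k,j) = 0" using h by simp
    then show "Y $ i $ j = 0" by (simp add: mat_def)
  qed
  then show "Y = 0" by (simp add: vec_eq_iff)
qed

lemma kron_mixed:
  assumes h: "kron (X::complex^'n^'n) (mat 1 :: complex^'m^'m) = kron (mat 1) (Y::complex^'m^'m)"
  shows "X = 0 \<or> (\<exists>c. c \<noteq> 0 \<and> X = mat c \<and> Y = mat c)"
proof -
  have e: "X $ i $ j * (if k = l then 1 else 0) = (if i = j then 1 else 0) * Y $ k $ l" for i j k l
    using arg_cong[OF h, of "\<lambda>M. M $ (i,k) $ (j,l)"] by (simp add: mat_def)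
  obtain i0 :: 'n where True by blast
  define c where "c = X $ i0 $ i0"
  obtain k0 :: 'm where True by blast
  have "X $ i $ j = mat c $ i $ j" for i j
      using e[of i j k0 k0] e[of i i k0 k0] e[of i0 i0 k0 k0] by (auto simp: mat_def c_def)
  then have X: "X = mat c" by (simp add: vec_eq_iff)
  have "Y $ k $ l = mat c $ k $ l" for k l
      using e[of i0 i0 k l] by (auto simp: mat_def c_def)
  then have Y: "Y = mat c" by (simp add: vec_eq_iff)
  show ?thesis using X Y by (cases "c = 0") (auto simp: mat_def vec_eq_iff)
qed

lemma trace_mat: "trace (mat c :: complex^'m^'m) = of_nat CARD('m) * c"
  by (simp add: trace_def mat_def)

lemma kron_mixed_sl1:
  assumes h: "kron (X::complex^'n^'n) (mat 1 :: complex^'m^'m) = kron (mat 1) (Y::complex^'m^'m)"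
    and "trace Y = 0" shows "X = 0"
  using kron_mixed[OF h] assms(2) by (auto simp: trace_mat)

lemma kron_mixed_sl2:
  assumes h: "kron (X::complex^'n^'n) (mat 1 :: complex^'m^'m) = kron (mat 1) (Y::complex^'m^'m)"
    and "trace X = 0" shows "Y = 0"
  using kron_mixed[OF h] assms(2) h kron_I2_eq0 by (auto simp: trace_mat)

lemma matrix_add_rdistrib': "((B + C) ** A) = (B ** A) + (C ** A)"
  by (simp add: vec_eq_iff matrix_matrix_mult_def distrib_right sum.distrib)

lemma comm_add1: "commutator (A + B) C = commutator A C + commutator B C"
  by (simp add: commutator_def matrix_add_ldistrib matrix_add_rdistrib')
lemma comm_add2: "commutator C (A + B) = commutator C A + commutator C B"
  by (simp add: commutator_def matrix_add_ldistrib matrix_add_rdistrib')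
lemma comm_scale1: "commutator (c *\<^sub>R A) (C::complex^'n^'n) = c *\<^sub>R commutator A C"
  by (simp add: commutator_def vec_eq_iff matrix_matrix_mult_def scaleR_sum_right algebra_simps)
lemma comm_scale2: "commutator (C::complex^'n^'n) (c *\<^sub>R A) = c *\<^sub>R commutator C A"
  by (simp add: commutator_def vec_eq_iff matrix_matrix_mult_def scaleR_sum_right algebra_simps)
lemma comm_0_1[simp]: "commutator 0 C = 0"
  by (simp add: commutator_def vec_eq_iff matrix_matrix_mult_def)
lemma comm_0_2[simp]: "commutator C 0 = 0"
  by (simp add: commutator_def vec_eq_iff matrix_matrix_mult_def)
lemma comm_self[simp]: "commutator C C = 0"
  by (simp add: commutator_def)
lemma comm_swap: "commutator A B = - commutator B A"
  by (simp add: commutator_def)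

lemma abelian_span: assumes "abelian S" shows "abelian (span S)"
proof -
  have 1: "commutator A B = 0" if A: "A \<in> span S" and B: "B \<in> S" for A B
  proof -
    have sub: "subspace {A. commutator A B = 0}"
      unfolding subspace_def by (simp add: comm_add1 comm_scale1)
    have "S \<subseteq> {A. commutator A B = 0}" using assms B unfolding abelian_def by blast
    from span_minimal[OF this sub] A show ?thesis by blast
  qed
  have "commutator A B = 0" if A: "A \<in> span S" and B: "B \<in> span S" for A B
  proof -
    have sub: "subspace {B. commutator A B = 0}"
      unfolding subspace_def by (simp add: comm_add2 comm_scale2)
    have "S \<subseteq> {B. commutator A B = 0}" using 1 A by blast
    from span_minimal[OF this sub] B show ?thesis by blast
  qed
  then show ?thesis unfolding abelian_def by blast
qed

lemma torus_max:
  assumes t: "torus_algebra t k" and k: "subspace k" and X: "X \<in> k"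
    and c: "\<forall>T\<in>t. commutator X T = 0"
  shows "X \<in> t"
proof -
  let ?s = "span (insert X t)"
  have maxt: "\<And>s. real_lie_algebra s \<Longrightarrow> abelian s \<Longrightarrow> t \<subseteq> s \<Longrightarrow> s \<subseteq> k \<Longrightarrow> s = t"
    and abt: "abelian t" and tk: "t \<subseteq> k"
    using t unfolding torus_algebra_def by blast+
  have cT: "commutator T X = 0" if "T \<in> t" for T
  proof -
    have "commutator T X = - commutator X T" by (rule comm_swap)
    then show ?thesis using c that by simp
  qed
  have ab: "abelian (insert X t)"
    unfolding abelian_def
  proof (intro ballI)
    fix A B assume "A \<in> insert X t" "B \<in> insert X t"
    then show "commutator A B = 0"
      using abt c cT unfolding abelian_def by (elim insertE) simp_all
  qed
  have abs: "abelian ?s" by (rule abelian_span[OF ab])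
  have r: "real_lie_algebra ?s"
    unfolding real_lie_algebra_def
  proof (intro conjI ballI)
    show "subspace ?s" by (rule subspace_span)
    fix A B assume "A \<in> ?s" "B \<in> ?s"
    then have "commutator A B = 0" using abs unfolding abelian_def by blast
    then show "commutator A B \<in> ?s" using span_zero by simp
  qed
  have ts: "t \<subseteq> ?s" using span_superset by blast
  have sk: "?s \<subseteq> k" by (rule span_minimal) (use tk X k in auto)
  have eq: "?s = t" by (rule maxt[OF r abs ts sk])
  have "X \<in> ?s" by (rule span_base) simp
  then show ?thesis unfolding eq .
qed

abbreviation H where "H X Y \<equiv> kron X (mat 1) + kron (mat 1) Y"

lemma H_mult: "H (X::complex^'n^'n) (Y::complex^'m^'m) ** H X' Y' = kron (X**X') (mat 1) + kron X Y' + kron X' Y + kron (mat 1) (Y**Y')"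
  by (simp only: matrix_add_ldistrib matrix_add_rdistrib' kron_mult matrix_mul_lid matrix_mul_rid add_ac)

lemma comm_H: "commutator (H (X::complex^'n^'n) (Y::complex^'m^'m)) (H X' Y') = H (commutator X X') (commutator Y Y')"
  unfolding commutator_def H_mult kron_diff1 kron_diff2 by (simp add: algebra_simps)

lemma hat_sum_lie:
  assumes a: "real_lie_algebra a" and b: "real_lie_algebra b"
  shows "real_lie_algebra (hat_sum a b)"
proof -
  have sa: "subspace a" and sb: "subspace b" using a b by (auto simp: real_lie_algebra_def)
  have "subspace (hat_sum a b)"
    unfolding subspace_def hat_sum_def
  proof (intro conjI ballI allI)
    show "0 \<in> {H X Y |X Y. X \<in> a \<and> Y \<in> b}"
      using subspace_0[OF sa] subspace_0[OF sb] by force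
  next
    fix x y assume "x \<in> {H X Y |X Y. X \<in> a \<and> Y \<in> b}" "y \<in> {H X Y |X Y. X \<in> a \<and> Y \<in> b}"
    then obtain X Y X' Y' where "x = H X Y" "y = H X' Y'" "X \<in> a" "Y \<in> b" "X' \<in> a" "Y' \<in> b" by blast
    then show "x + y \<in> {H X Y |X Y. X \<in> a \<and> Y \<in> b}"
      using subspace_add[OF sa] subspace_add[OF sb]
      by (intro CollectI exI[of _ "X + X'"] exI[of _ "Y + Y'"]) (simp add: kron_add1 kron_add2 algebra_simps)
  next
    fix c x assume "x \<in> {H X Y |X Y. X \<in> a \<and> Y \<in> b}"
    then obtain X Y where "x = H X Y" "X \<in> a" "Y \<in> b" by blast
    then show "c *\<^sub>R x \<in> {H X Y |X Y. X \<in> a \<and> Y \<in> b}"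
      using subspace_scale[OF sa] subspace_scale[OF sb]
      by (intro CollectI exI[of _ "c *\<^sub>R X"] exI[of _ "c *\<^sub>R Y"]) (simp add: kron_scale1 kron_scale2 scaleR_add_right)
  qed
  moreover have "commutator A B \<in> hat_sum a b" if AB: "A \<in> hat_sum a b" "B \<in> hat_sum a b" for A B
  proof -
    obtain X Y X' Y' where "A = H X Y" "B = H X' Y'" "X \<in> a" "Y \<in> b" "X' \<in> a" "Y' \<in> b"
      using AB unfolding hat_sum_def by blast
    then have "commutator A B = H (commutator X X') (commutator Y Y')" by (simp add: comm_H)
    then show ?thesis using a b \<open>X \<in> a\<close> \<open>Y \<in> b\<close> \<open>X' \<in> a\<close> \<open>Y' \<in> b\<close>
      unfolding hat_sum_def real_lie_algebra_def by blast
  qed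
  ultimately show ?thesis by (simp add: real_lie_algebra_def)
qed

lemma hat_sum_abelian:
  assumes "abelian a" "abelian b" shows "abelian (hat_sum a b)"
  using assms unfolding abelian_def hat_sum_def by (auto simp: comm_H)

lemma hat_sum_mono: "a \<subseteq> a' \<Longrightarrow> b \<subseteq> b' \<Longrightarrow> hat_sum a b \<subseteq> hat_sum a' b'"
  unfolding hat_sum_def by blast

lemma H_in: "X \<in> a \<Longrightarrow> Y \<in> b \<Longrightarrow> H X Y \<in> hat_sum a b"
  unfolding hat_sum_def by blast

lemma part1:
  fixes k1 :: "(complex^'n^'n) set" and k2 :: "(complex^'m^'m) set"
  assumes k1: "real_lie_algebra k1" and k2: "real_lie_algebra k2"
    and t1: "torus_algebra t1 k1" and t2: "torus_algebra t2 k2"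
  shows "torus_algebra (hat_sum t1 t2) (hat_sum k1 k2)"
proof -
  have l1: "real_lie_algebra t1" "abelian t1" "t1 \<subseteq> k1" and l2: "real_lie_algebra t2" "abelian t2" "t2 \<subseteq> k2"
    using t1 t2 by (auto simp: torus_algebra_def)
  have z1: "0 \<in> t1" and z2: "0 \<in> t2" using l1 l2 by (auto simp: real_lie_algebra_def subspace_0)
  have sk1: "subspace k1" and sk2: "subspace k2" using k1 k2 by (simp_all add: real_lie_algebra_def)
  have "s \<subseteq> hat_sum t1 t2" if s: "real_lie_algebra s" "abelian s" "hat_sum t1 t2 \<subseteq> s" "s \<subseteq> hat_sum k1 k2" for s
  proof
    fix Z assume Z: "Z \<in> s"
    then obtain X Y where ZXY: "Z = H X Y" "X \<in> k1" "Y \<in> k2" using s(4) unfolding hat_sum_def by blast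
    have "commutator X T = 0" if T: "T \<in> t1" for T
    proof -
      have "H T 0 \<in> s" using H_in[OF T z2] s(3) by blast
      then have "commutator Z (H T 0) = 0" using Z s(2) by (auto simp: abelian_def)
      then have "kron (commutator X T) (mat 1 :: complex^'m^'m) = 0" using comm_H[of X Y T 0] by (simp add: ZXY)
      then show ?thesis by (rule kron_I1_eq0)
    qed
    then have X: "X \<in> t1" using torus_max[OF t1 sk1 ZXY(2)] by blast
    have "commutator Y T = 0" if T: "T \<in> t2" for T
    proof -
      have "H 0 T \<in> s" using H_in[OF z1 T] s(3) by blast
      then have "commutator Z (H 0 T) = 0" using Z s(2) by (auto simp: abelian_def)
      then have "kron (mat 1 :: complex^'n^'n) (commutator Y T) = 0" using comm_H[of X Y 0 T] by (simp add: ZXY)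
      then show ?thesis by (rule kron_I2_eq0)
    qed
    then have Y: "Y \<in> t2" using torus_max[OF t2 sk2 ZXY(3)] by blast
    show "Z \<in> hat_sum t1 t2" using H_in[OF X Y] ZXY by simp
  qed
  then show ?thesis unfolding torus_algebra_def
    using hat_sum_lie[OF l1(1) l2(1)] hat_sum_abelian[OF l1(2) l2(2)] hat_sum_mono[OF l1(3) l2(3)]
    by blast
qed

lemma part2:
  fixes k1 :: "(complex^'n^'n) set" and k2 :: "(complex^'m^'m) set"
  assumes sl1: "k1 \<subseteq> sl" and sl2: "k2 \<subseteq> sl"
    and l1: "real_lie_algebra t1" "t1 \<subseteq> k1" and l2: "real_lie_algebra t2" "t2 \<subseteq> k2"
    and T: "torus_algebra (hat_sum t1 t2) (hat_sum k1 k2)"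
  shows "torus_algebra t1 k1 \<and> torus_algebra t2 k2"
proof -
  have z1: "0 \<in> t1" and z2: "0 \<in> t2" using l1 l2 by (auto simp: real_lie_algebra_def subspace_0)
  have abT: "abelian (hat_sum t1 t2)" using T unfolding torus_algebra_def by blast
  have maxT: "\<And>s. real_lie_algebra s \<Longrightarrow> abelian s \<Longrightarrow> hat_sum t1 t2 \<subseteq> s \<Longrightarrow> s \<subseteq> hat_sum k1 k2 \<Longrightarrow> s = hat_sum t1 t2"
    using T unfolding torus_algebra_def by blast
  have ab1: "abelian t1"
    unfolding abelian_def
  proof (intro ballI)
    fix A B assume AB: "A \<in> t1" "B \<in> t1"
    have "commutator (H A (0::complex^'m^'m)) (H B 0) = 0"
      by (rule abT[unfolded abelian_def, rule_format, OF H_in[OF AB(1) z2] H_in[OF AB(2) z2]])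
    then have "kron (commutator A B) (mat 1 :: complex^'m^'m) = 0" using comm_H[of A "0::complex^'m^'m" B 0] by simp
    then show "commutator A B = 0" by (rule kron_I1_eq0)
  qed
  have ab2: "abelian t2"
    unfolding abelian_def
  proof (intro ballI)
    fix A B assume AB: "A \<in> t2" "B \<in> t2"
    have "commutator (H (0::complex^'n^'n) A) (H 0 B) = 0"
      by (rule abT[unfolded abelian_def, rule_format, OF H_in[OF z1 AB(1)] H_in[OF z1 AB(2)]])
    then have "kron (mat 1 :: complex^'n^'n) (commutator A B) = 0" using comm_H[of "0::complex^'n^'n" A 0 B] by simp
    then show "commutator A B = 0" by (rule kron_I2_eq0)
  qed
  have m1: "s = t1" if s: "real_lie_algebra s" "abelian s" "t1 \<subseteq> s" "s \<subseteq> k1" for s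
  proof -
    have "hat_sum s t2 = hat_sum t1 t2"
      by (rule maxT[OF hat_sum_lie[OF s(1) l2(1)] hat_sum_abelian[OF s(2) ab2]
        hat_sum_mono[OF s(3) order_refl] hat_sum_mono[OF s(4) l2(2)]])
    have "X \<in> t1" if X: "X \<in> s" for X
    proof -
      have "H X 0 \<in> hat_sum t1 t2" using H_in[OF X z2] \<open>hat_sum s t2 = hat_sum t1 t2\<close> by simp
      then obtain A Y where AY: "H X 0 = H A Y" "A \<in> t1" "Y \<in> t2" unfolding hat_sum_def by blast
      have e: "kron X (mat 1 :: complex^'m^'m) = kron A (mat 1) + kron (mat 1) Y" using AY(1) by simp
      have "kron (X - A) (mat 1 :: complex^'m^'m) = kron (mat 1) Y"
        unfolding kron_diff1 e by simp
      moreover have "trace Y = 0" using AY(3) l2(2) sl2 by (auto simp: sl_def)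
      ultimately have "X - A = 0" by (rule kron_mixed_sl1)
      then show ?thesis using AY(2) by simp
    qed
    then show ?thesis using s(3) by blast
  qed
  have m2: "s = t2" if s: "real_lie_algebra s" "abelian s" "t2 \<subseteq> s" "s \<subseteq> k2" for s
  proof -
    have "hat_sum t1 s = hat_sum t1 t2"
      by (rule maxT[OF hat_sum_lie[OF l1(1) s(1)] hat_sum_abelian[OF ab1 s(2)]
        hat_sum_mono[OF order_refl s(3)] hat_sum_mono[OF l1(2) s(4)]])
    have "Y \<in> t2" if Y: "Y \<in> s" for Y
    proof -
      have "H 0 Y \<in> hat_sum t1 t2" using H_in[OF z1 Y] \<open>hat_sum t1 s = hat_sum t1 t2\<close> by simp
      then obtain A B where AB: "H 0 Y = H A B" "A \<in> t1" "B \<in> t2" unfolding hat_sum_def by blast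
      have e: "kron (mat 1 :: complex^'n^'n) Y = kron A (mat 1) + kron (mat 1) B" using AB(1) by simp
      have "kron A (mat 1 :: complex^'m^'m) = kron (mat 1) (Y - B)"
        unfolding kron_diff2 e by simp
      moreover have "trace A = 0" using AB(2) l1(2) sl1 by (auto simp: sl_def)
      ultimately have "Y - B = 0" by (rule kron_mixed_sl2)
      then show ?thesis using AB(3) by simp
    qed
    then show ?thesis using s(3) by blast
  qed
  show ?thesis unfolding torus_algebra_def using l1 l2 ab1 ab2 m1 m2 by blast
qed

theorem lemma3p2:
  fixes k1 :: "(complex^'n^'n) set" and k2 :: "(complex^'m^'m) set"
  assumes "real_lie_algebra k1" and "real_lie_algebra k2"
  shows "(\<forall>t1 t2. torus_algebra t1 k1 \<and> torus_algebra t2 k2 \<longrightarrow>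
            torus_algebra (hat_sum t1 t2) (hat_sum k1 k2))
       \<and> (k1 \<subseteq> sl \<and> k2 \<subseteq> sl \<longrightarrow>
            (\<forall>t1 t2. real_lie_algebra t1 \<and> t1 \<subseteq> k1 \<and> real_lie_algebra t2 \<and> t2 \<subseteq> k2 \<and>
               torus_algebra (hat_sum t1 t2) (hat_sum k1 k2) \<longrightarrow>
               torus_algebra t1 k1 \<and> torus_algebra t2 k2))"
  using part1[OF assms] part2 by blast

end
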